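(* Let $p\in(1/2,1)$. For $\epsilon\in[0,1)$ not equal to any $\epsilon_m$, let $m=m(\epsilon)$ be the unique integer $m\ge1$ with $\epsilon\in(\epsilon_m,\epsilon_{m+1})$, and define integers $r_1(\epsilon),r_2(\epsilon),\ldots$ by $r_1=m+1$ and, for $n\ge2$, $r_n=m$ if $\sum_{i=1}^{n-1}(r_i\eta-1)+m\eta>1$ and $r_n=m+1$ otherwise. Fix an integer $r\ge1$. Then for every $i\ge2$, $r_i(\epsilon)\to r$ as $\epsilon\to\epsilon_r$ (i.e. $r_i(\epsilon)=r$ for all such $\epsilon$ sufficiently close to $\epsilon_r$; for $r=1$ this is understood as $\epsilon\to\epsilon_1^+$).
   Context: Let $\alpha=p/(1-p)$ and for $r=1,2,\ldots$ let $\epsilon_r=\dfrac{\alpha-\alpha^{1/r}}{\alpha^{1/r+1}-1}$ (an increasing sequence with $\epsilon_1=0$ and $\epsilon_r\to1$). For $\epsilon\in[0,1)$ let $a=p+(1-p)\epsilon$, $b=p(1-\epsilon)$ and $\eta=\eta(\epsilon)=\log\big(a/(1-b)\big)/\log\alpha$. The integer $r_n$ is the number of consecutive $Y$ observations needed, in the $n$-th stage of an enumeration of paths, for the walk (starting at $0$, up-steps $\eta$, down-steps $1$, stopped on leaving $[-1,1]$) to exceed $1$. *)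

theory Defs
  imports "HOL-Analysis.Analysis"
begin

definition alpha :: "real \<Rightarrow> real" where
  "alpha p = p / (1 - p)"

definition eps :: "real \<Rightarrow> nat \<Rightarrow> real" where
  "eps p r = (alpha p - alpha p powr (1 / real r)) / (alpha p powr (1 / real r + 1) - 1)"

definition eta :: "real \<Rightarrow> real \<Rightarrow> real" where
  "eta p e = ln ((p + (1 - p) * e) / (1 - p * (1 - e))) / ln (alpha p)"

definition mval :: "real \<Rightarrow> real \<Rightarrow> nat" where
  "mval p e = (THE m. 1 \<le> m \<and> eps p m < e \<and> e < eps p (Suc m))"

text \<open>rS h m n = (r_(n+1), sum_(i=1)^(n+1) (r_i * h - 1)), where
  r_1 = m+1 and r_(n) = m if sum_(i<n)(r_i h - 1) + m h > 1, else m+1.\<close>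
fun rS :: "real \<Rightarrow> nat \<Rightarrow> nat \<Rightarrow> nat \<times> real" where
  "rS h m 0 = (m + 1, real (m + 1) * h - 1)"
| "rS h m (Suc n) =
     (let S = snd (rS h m n);
          r = (if S + real m * h > 1 then m else m + 1)
      in (r, S + real r * h - 1))"

definition rseq :: "real \<Rightarrow> real \<Rightarrow> nat \<Rightarrow> nat" where
  "rseq p e i = fst (rS (eta p e) (mval p e) (i - 1))"

definition admissible :: "real \<Rightarrow> real set" where
  "admissible p = {e. 0 \<le> e \<and> e < 1 \<and> (\<forall>m\<ge>1. e \<noteq> eps p m)}"

end

theory Submission
  imports Defs
begin

lemma rS_A:
  assumes "\<forall>k<n. real (m+1)*h - 1 + real k*(real m*h - 1) + real m*h > 1"
  shows "rS h m n = (if n = 0 then m+1 else m, real (m+1)*h - 1 + real n*(real m*h - 1))"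
  using assms
proof (induction n)
  case 0
  then show ?case by simp
next
  case (Suc n)
  then have IH: "rS h m n = (if n = 0 then m+1 else m, real (m+1)*h - 1 + real n*(real m*h - 1))" by auto
  have c: "real (m+1)*h - 1 + real n*(real m*h - 1) + real m*h > 1" using Suc.prems by auto
  show ?case using c by (simp add: IH Let_def algebra_simps)
qed

lemma rS_B:
  assumes "\<forall>k<n. real (k+1)*(real (m+1)*h - 1) + real m*h \<le> 1"
  shows "rS h m n = (m+1, real (n+1)*(real (m+1)*h - 1))"
  using assms
proof (induction n)
  case 0
  then show ?case by simp
next
  case (Suc n)
  then have IH: "rS h m n = (m+1, real (n+1)*(real (m+1)*h - 1))" by auto
  have c: "real (n+1)*(real (m+1)*h - 1) + real m*h \<le> 1" using Suc.prems by auto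
  show ?case using c by (simp add: IH Let_def algebra_simps)
qed

lemma alpha_gt1: assumes "1/2 < p" "p < 1" shows "alpha p > 1"
  using assms by (simp add: alpha_def field_simps)

lemma eps_iff:
  assumes p1: "1/2 < p" and p2: "p < 1" and k: "1 \<le> k" and e: "0 \<le> e"
  shows "(eps p k < e \<longleftrightarrow> eta p e < 1 / real k) \<and> (e < eps p k \<longleftrightarrow> eta p e > 1 / real k)"
proof -
  define a where "a = alpha p"
  have a1: "a > 1" using alpha_gt1[OF p1 p2] a_def by simp
  define b where "b = a powr (1 / real k)"
  have b1: "b > 1" unfolding b_def using a1 k by (intro gr_one_powr) auto
  have kr: "0 < 1 / real k" "1 / real k \<le> 1" using k by auto
  have ba: "b \<le> a" unfolding b_def using powr_mono[OF kr(2), of a] a1 by simp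
  have D: "a powr (1 / real k + 1) - 1 = a*b - 1" unfolding b_def using a1
    by (simp add: powr_add mult.commute)
  have Dpos: "a*b - 1 > 0" using a1 b1 less_1_mult by simp
  have epsk: "eps p k = (a - b)/(a*b - 1)" unfolding eps_def a_def[symmetric] b_def[symmetric] D by simp
  define Q where "Q = (p + (1 - p) * e) / (1 - p * (1 - e))"
  have den: "1 - p * (1 - e) > 0"
  proof -
    have "p * e \<ge> 0" using p1 e by simp
    moreover have "1 - p * (1 - e) = (1 - p) + p * e" by (simp add: algebra_simps)
    ultimately show ?thesis using p2 by linarith
  qed
  have Qpos: "Q > 0" unfolding Q_def using den p1 p2 e by (simp add: add_pos_nonneg)
  have etaQ: "eta p e = ln Q / ln a" unfolding eta_def Q_def a_def by simp
  have lna: "ln a > 0" using a1 by simp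
  have lnb: "ln b = ln a / real k" unfolding b_def using a1 by (simp add: ln_powr)
  have eq1: "eta p e < 1 / real k \<longleftrightarrow> Q < b"
  proof -
    have "eta p e < 1 / real k \<longleftrightarrow> ln Q < ln a / real k" unfolding etaQ using lna k
      by (simp add: field_simps)
    also have "\<dots> \<longleftrightarrow> Q < b" using lnb Qpos b1 by (metis ln_less_cancel_iff less_trans zero_less_one)
    finally show ?thesis .
  qed
  have eq2: "eta p e > 1 / real k \<longleftrightarrow> Q > b"
  proof -
    have "eta p e > 1 / real k \<longleftrightarrow> ln Q > ln a / real k" unfolding etaQ using lna k
      by (simp add: field_simps)
    also have "\<dots> \<longleftrightarrow> Q > b" using lnb Qpos b1 by (metis ln_less_cancel_iff less_trans zero_less_one)
    finally show ?thesis .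
  qed
  have ap: "a = p / (1 - p)" unfolding a_def alpha_def by simp
  have q1p: "1 - p > 0" using p2 by simp
  have Qb1: "Q < b \<longleftrightarrow> p + (1-p)*e < b * (1 - p*(1-e))" unfolding Q_def using den
    by (simp add: divide_less_eq)
  have Qb2: "Q > b \<longleftrightarrow> p + (1-p)*e > b * (1 - p*(1-e))" unfolding Q_def using den
    by (simp add: less_divide_eq)
  have E1: "eps p k < e \<longleftrightarrow> a - b < e*(a*b - 1)" unfolding epsk using Dpos
    by (simp add: divide_less_eq mult.commute)
  have E2: "e < eps p k \<longleftrightarrow> e*(a*b - 1) < a - b" unfolding epsk using Dpos
    by (simp add: less_divide_eq mult.commute)
  have key: "(p + (1-p)*e) - b * (1 - p*(1-e)) = (1-p) * ((a - b) - e*(a*b-1))"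
  proof -
    have h: "(1-p)*a = p" unfolding ap using q1p by simp
    have "(1-p) * ((a - b) - e*(a*b-1)) = (1-p)*a - (1-p)*b - e*b*((1-p)*a) + (1-p)*e"
      by (simp add: algebra_simps)
    also have "\<dots> = p - (1-p)*b - e*b*p + (1-p)*e" by (simp only: h)
    also have "\<dots> = (p + (1-p)*e) - b * (1 - p*(1-e))" by (simp add: algebra_simps)
    finally show ?thesis by simp
  qed
  have "eps p k < e \<longleftrightarrow> Q < b"
  proof -
    have "(1-p) * ((a - b) - e*(a*b-1)) < 0 \<longleftrightarrow> (a - b) - e*(a*b-1) < 0"
      using q1p by (simp add: mult_less_0_iff)
    then show ?thesis using E1 Qb1 key by linarith
  qed
  moreover have "e < eps p k \<longleftrightarrow> Q > b"
  proof -
    have "(1-p) * ((a - b) - e*(a*b-1)) > 0 \<longleftrightarrow> (a - b) - e*(a*b-1) > 0"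
      using q1p by (simp add: zero_less_mult_iff)
    then show ?thesis using E2 Qb2 key by linarith
  qed
  ultimately show ?thesis using eq1 eq2 by simp
qed

lemma eps_nonneg:
  assumes p1: "1/2 < p" and p2: "p < 1" and k: "1 \<le> k"
  shows "0 \<le> eps p k"
proof -
  define a where "a = alpha p"
  have a1: "a > 1" using alpha_gt1[OF p1 p2] a_def by simp
  define b where "b = a powr (1 / real k)"
  have b1: "b > 1" unfolding b_def using a1 k by (intro gr_one_powr) auto
  have kr: "0 < 1 / real k" "1 / real k \<le> 1" using k by auto
  have ba: "b \<le> a" unfolding b_def using powr_mono[OF kr(2), of a] a1 by simp
  have D: "a powr (1 / real k + 1) - 1 = a*b - 1" unfolding b_def using a1
    by (simp add: powr_add mult.commute)
  have Dpos: "a*b - 1 > 0" using a1 b1 less_1_mult by simp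
  have epsk: "eps p k = (a - b)/(a*b - 1)" unfolding eps_def a_def[symmetric] b_def[symmetric] D by simp
  show ?thesis unfolding epsk using ba Dpos by simp
qed

lemma eps_one: assumes "1/2 < p" "p < 1" shows "eps p 1 = 0"
  using alpha_gt1[OF assms] by (simp add: eps_def)

lemma eta_at_eps:
  assumes p1: "1/2 < p" and p2: "p < 1" and k: "1 \<le> k"
  shows "eta p (eps p k) = 1 / real k"
  using eps_iff[OF p1 p2 k eps_nonneg[OF p1 p2 k]] by linarith

lemma uniq_m:
  fixes t :: real and m m' :: nat
  assumes "t * m < 1" "1 < t * (m+1)" "t * m' < 1" "1 < t * (m'+1)" "t > 0"
  shows "m = m'"
proof -
  have "t * m < t * (m'+1)" using assms by linarith
  then have "real m < m' + 1" using assms(5) by (simp add: mult_less_cancel_left_pos)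
  moreover have "t * m' < t * (m+1)" using assms by linarith
  then have "real m' < m + 1" using assms(5) by (simp add: mult_less_cancel_left_pos)
  ultimately show ?thesis by linarith
qed

lemma mval_eq:
  assumes p1: "1/2 < p" and p2: "p < 1" and m: "1 \<le> m" and e: "0 \<le> e"
    and t1: "eta p e < 1 / real m" and t2: "eta p e > 1 / real (Suc m)"
  shows "mval p e = m"
  unfolding mval_def
proof (rule the_equality)
  have "1 \<le> Suc m" by simp
  show "1 \<le> m \<and> eps p m < e \<and> e < eps p (Suc m)"
    using eps_iff[OF p1 p2 m e] eps_iff[OF p1 p2 \<open>1 \<le> Suc m\<close> e] t1 t2 m by simp
next
  fix m' assume h: "1 \<le> m' \<and> eps p m' < e \<and> e < eps p (Suc m')"
  have "1 \<le> Suc m'" by simp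
  have s1: "eta p e < 1 / real m'" "eta p e > 1 / real (Suc m')"
    using eps_iff[OF p1 p2 _ e, of m'] eps_iff[OF p1 p2 \<open>1 \<le> Suc m'\<close> e] h by auto
  define t where "t = eta p e"
  have tpos: "t > 0" using t2 t_def by (smt (verit) divide_pos_pos of_nat_0_less_iff zero_less_Suc)
  have a1: "t * m < 1" using t1 m unfolding t_def by (simp add: field_simps)
  have a2: "1 < t * (m+1)" using t2 unfolding t_def by (simp add: field_simps)
  have a3: "t * m' < 1" using s1 h unfolding t_def by (simp add: field_simps)
  have a4: "1 < t * (m'+1)" using s1 unfolding t_def by (simp add: field_simps)
  show "m' = m" using uniq_m[OF a3 a4 a1 a2 tpos] .
qed

theorem lemma3:
  fixes p :: real and r :: nat
  assumes "1/2 < p" and "p < 1" and "1 \<le> r"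
  shows "\<forall>i\<ge>2. eventually (\<lambda>e. rseq p e i = r) (at (eps p r) within admissible p)"
proof (intro allI impI)
  fix i :: nat assume i2: "2 \<le> i"
  note p1 = assms(1) and p2 = assms(2) and r1 = assms(3)
  define F where "F = at (eps p r) within admissible p"
  define x0 where "x0 = eps p r"
  have x0nn: "0 \<le> x0" unfolding x0_def using eps_nonneg[OF p1 p2 r1] .
  have den: "1 - p * (1 - x0) > 0"
  proof -
    have "p * x0 \<ge> 0" using p1 x0nn by simp
    moreover have "1 - p * (1 - x0) = (1 - p) + p * x0" by (simp add: algebra_simps)
    ultimately show ?thesis using p2 by linarith
  qed
  have num: "p + (1 - p) * x0 > 0" using p1 p2 x0nn by (simp add: add_pos_nonneg)
  have lnapos: "ln (alpha p) > 0" using alpha_gt1[OF p1 p2] by simp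
  have T0: "((\<lambda>e. eta p e) \<longlongrightarrow> eta p x0) F"
    unfolding eta_def F_def x0_def[symmetric]
    using den num lnapos
    by (intro tendsto_intros) auto
  have T: "((\<lambda>e. eta p e) \<longlongrightarrow> 1 / real r) F"
    using T0 eta_at_eps[OF p1 p2 r1] unfolding x0_def by simp
  have E1: "eventually (\<lambda>e. e \<in> admissible p) F"
    unfolding F_def eventually_at_filter by simp
  have E2: "eventually (\<lambda>e. eta p e > 1 / real (Suc r)) F"
    using order_tendstoD(1)[OF T] r1 by (simp add: frac_less2)
  have E3: "eventually (\<lambda>e. 2 \<le> r \<longrightarrow> eta p e < 1 / real (r - 1)) F"
  proof (cases "2 \<le> r")
    case True
    have "1 / real r < 1 / real (r - 1)" using True by (simp add: frac_less2)
    from order_tendstoD(2)[OF T this] show ?thesis by (rule eventually_mono) (use True in \<open>simp add: of_nat_diff\<close>)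
  qed simp
  have E4: "eventually (\<lambda>e. \<forall>k\<in>{..<i-1}. real (r+1)*eta p e - 1 + real k*(real r*eta p e - 1) + real r*eta p e > 1) F"
  proof (rule eventually_ball_finite, simp, intro ballI)
    fix k assume "k \<in> {..<i-1}"
    have L: "((\<lambda>e. real (r+1)*eta p e - 1 + real k*(real r*eta p e - 1) + real r*eta p e) \<longlongrightarrow>
       real (r+1)*(1/real r) - 1 + real k*(real r*(1/real r) - 1) + real r*(1/real r)) F"
      by (intro tendsto_intros T)
    have "real (r+1)*(1/real r) - 1 + real k*(real r*(1/real r) - 1) + real r*(1/real r) = 1 + 1/real r"
      using r1 by (simp add: field_simps)
    moreover have "1 < 1 + 1/real r" using r1 by simp
    ultimately have "1 < real (r+1)*(1/real r) - 1 + real k*(real r*(1/real r) - 1) + real r*(1/real r)" by simp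
    from order_tendstoD(1)[OF L this]
    show "eventually (\<lambda>e. real (r+1)*eta p e - 1 + real k*(real r*eta p e - 1) + real r*eta p e > 1) F" .
  qed
  have E5: "eventually (\<lambda>e. \<forall>k\<in>{..<i-1}. real (k+1)*(real (r-1+1)*eta p e - 1) + real (r-1)*eta p e < 1) F"
  proof (rule eventually_ball_finite, simp, intro ballI)
    fix k assume "k \<in> {..<i-1}"
    have L: "((\<lambda>e. real (k+1)*(real (r-1+1)*eta p e - 1) + real (r-1)*eta p e) \<longlongrightarrow>
       real (k+1)*(real (r-1+1)*(1/real r) - 1) + real (r-1)*(1/real r)) F"
      by (intro tendsto_intros T)
    have "real (k+1)*(real (r-1+1)*(1/real r) - 1) + real (r-1)*(1/real r) = 1 - 1/real r"
      using r1 by (simp add: field_simps of_nat_diff)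
    moreover have "1 - 1/real r < 1" using r1 by simp
    ultimately have "real (k+1)*(real (r-1+1)*(1/real r) - 1) + real (r-1)*(1/real r) < 1" by simp
    from order_tendstoD(2)[OF L this]
    show "eventually (\<lambda>e. real (k+1)*(real (r-1+1)*eta p e - 1) + real (r-1)*eta p e < 1) F" .
  qed
  have "eventually (\<lambda>e. rseq p e i = r) F"
    using E1 E2 E3 E4 E5
  proof eventually_elim
    case (elim e)
    have adm: "0 \<le> e" "e < 1" "\<And>m. 1 \<le> m \<Longrightarrow> e \<noteq> eps p m"
      using elim(1) unfolding admissible_def by auto
    define t where "t = eta p e"
    have tne: "t \<noteq> 1 / real r"
    proof
      assume "t = 1 / real r"
      then have "\<not> eps p r < e" "\<not> e < eps p r"
        using eps_iff[OF p1 p2 r1 adm(1)] unfolding t_def by auto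
      then show False using adm(3)[OF r1] by linarith
    qed
    have tlt1: "t < 1"
    proof -
      have "e \<noteq> 0" using adm(3)[of 1] eps_one[OF p1 p2] by auto
      then have "eps p 1 < e" using adm(1) eps_one[OF p1 p2] by simp
      then show ?thesis using eps_iff[OF p1 p2 _ adm(1), of 1] unfolding t_def by simp
    qed
    have ri: "rseq p e i = fst (rS t (mval p e) (i - 1))" unfolding rseq_def t_def by simp
    show ?case
    proof (cases "t < 1 / real r")
      case True
      have "mval p e = r" using mval_eq[OF p1 p2 r1 adm(1)] True elim(2) unfolding t_def by simp
      moreover have "rS t r (i-1) = (if i - 1 = 0 then r+1 else r, real (r+1)*t - 1 + real (i-1)*(real r*t - 1))"
        by (rule rS_A) (use elim(4) in \<open>auto simp: t_def\<close>)
      ultimately show ?thesis using ri i2 by simp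
    next
      case False
      then have tgt: "t > 1 / real r" using tne by simp
      have r2: "2 \<le> r"
      proof (rule ccontr)
        assume "\<not> 2 \<le> r" then have "r = 1" using r1 by simp
        then show False using tgt tlt1 by simp
      qed
      have rm: "1 \<le> r - 1" "Suc (r - 1) = r" using r2 by auto
      have "mval p e = r - 1" using mval_eq[OF p1 p2 rm(1) adm(1)] tgt elim(3) r2 rm(2)
        unfolding t_def by simp
      moreover have "rS t (r-1) (i-1) = (r-1+1, real (i-1+1)*(real (r-1+1)*t - 1))"
        by (rule rS_B) (use elim(5) in \<open>auto simp: t_def intro: less_imp_le\<close>)
      ultimately show ?thesis using ri rm by simp
    qed
  qed
  then show "eventually (\<lambda>e. rseq p e i = r) (at (eps p r) within admissible p)"
    unfolding F_def .
qed

end
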